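(* Let $k\ge1$ and $n\ge k+1$ be integers. The number of (labeled) forests $F$ such that: the vertex set of $F$ is $\{1,\dots,k+1\}\cup R$ for some subset $R\subseteq\{k+2,\dots,n\}$; every tree of $F$ has at least two vertices; exactly one tree of $F$ contains no vertex of $R$, and this tree contains both vertices $1$ and $2$; and every other tree of $F$ contains exactly one vertex of $R$ (its root), is equal to $n^{k-1}$.
   Context: Forests are simple undirected acyclic graphs on the stated labeled vertex set; two forests are counted as different if their vertex sets or edge sets differ. *)

theory Defs
  imports Main
begin

definition simple_graph :: "nat set \<Rightarrow> nat set set \<Rightarrow> bool" where
  "simple_graph V E \<longleftrightarrow> (\<forall>e\<in>E. \<exists>u v. u \<noteq> v \<and> e = {u, v} \<and> u \<in> V \<and> v \<in> V)"

definition adj :: "nat set set \<Rightarrow> nat \<Rightarrow> nat \<Rightarrow> bool" where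
  "adj E u v \<longleftrightarrow> {u, v} \<in> E"

definition has_cycle :: "nat set set \<Rightarrow> bool" where
  "has_cycle E \<longleftrightarrow> (\<exists>xs. length xs \<ge> 3 \<and> distinct xs \<and>
      (\<forall>i < length xs. {xs ! i, xs ! ((i + 1) mod length xs)} \<in> E))"

definition is_forest :: "nat set \<Rightarrow> nat set set \<Rightarrow> bool" where
  "is_forest V E \<longleftrightarrow> simple_graph V E \<and> \<not> has_cycle E"

definition components :: "nat set \<Rightarrow> nat set set \<Rightarrow> nat set set" where
  "components V E = (\<lambda>v. {u \<in> V. (adj E)\<^sup>*\<^sup>* v u}) ` V"

end

theory Submission
  imports Defs
begin


abbreviation conn :: "nat set set \<Rightarrow> nat \<Rightarrow> nat \<Rightarrow> bool" where
  "conn E \<equiv> (adj E)\<^sup>*\<^sup>*"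

lemma adj_sym: "adj E u v = adj E v u"
  unfolding adj_def by (simp add: insert_commute)

lemma conn_sym: "conn E u v \<Longrightarrow> conn E v u"
proof (induction rule: rtranclp_induct)
  case base then show ?case by simp
next
  case (step y z)
  then have "adj E z y" using adj_sym by blast
  then show ?case using step.IH by (rule converse_rtranclp_into_rtranclp)
qed

lemma conn_trans: "conn E u v \<Longrightarrow> conn E v w \<Longrightarrow> conn E u w"
  by (rule rtranclp_trans)

lemma conn_mono: "conn E u v \<Longrightarrow> E \<subseteq> F \<Longrightarrow> conn F u v"
proof (induction rule: rtranclp_induct)
  case base then show ?case by simp
next
  case (step y z)
  then have "adj F y z" by (auto simp: adj_def)
  with step show ?case by (meson rtranclp.rtrancl_into_rtrancl)
qed

lemma conn_edge: "{u, v} \<in> E \<Longrightarrow> conn E u v"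
  by (simp add: adj_def r_into_rtranclp)

lemma conn_first: "conn E u v \<Longrightarrow> u \<noteq> v \<Longrightarrow> \<exists>w. {u, w} \<in> E \<and> w \<noteq> u"
  by (induction rule: converse_rtranclp_induct) (auto simp: adj_def)

lemma conn_in_V: "conn E u v \<Longrightarrow> simple_graph V E \<Longrightarrow> u \<in> V \<Longrightarrow> v \<in> V"
proof (induction rule: rtranclp_induct)
  case base then show ?case by simp
next
  case (step y z)
  then have "{y, z} \<in> E" by (simp add: adj_def)
  with step.prems(1) obtain a b where "a \<noteq> b" "{y, z} = {a, b}" "a \<in> V" "b \<in> V"
    unfolding simple_graph_def by blast
  then show ?case by (metis insert_iff singletonD)
qed

lemma conn_Union: "conn E u v \<Longrightarrow> u \<noteq> v \<Longrightarrow> v \<in> \<Union>E"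
  using conn_first[OF conn_sym] by blast

lemma conn_isolated: "conn E u v \<Longrightarrow> u \<notin> \<Union>E \<Longrightarrow> v = u"
  using conn_first by blast

lemma has_cycle_mono: "E \<subseteq> F \<Longrightarrow> has_cycle E \<Longrightarrow> has_cycle F"
  unfolding has_cycle_def by blast



definition ispath :: "nat set set \<Rightarrow> nat list \<Rightarrow> nat \<Rightarrow> nat \<Rightarrow> bool" where
  "ispath E xs a b \<longleftrightarrow> distinct xs \<and> xs \<noteq> [] \<and> xs ! 0 = a \<and> xs ! (length xs - 1) = b
     \<and> (\<forall>i. Suc i < length xs \<longrightarrow> {xs ! i, xs ! Suc i} \<in> E)"

lemma conn_path: "conn E a b \<Longrightarrow> \<exists>xs. ispath E xs a b"
proof (induction rule: rtranclp_induct)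
  case base
  show ?case by (rule exI[of _ "[a]"]) (simp add: ispath_def)
next
  case (step y z)
  then obtain xs where xs: "ispath E xs a y" by blast
  have yz: "{y, z} \<in> E" using step(2) by (simp add: adj_def)
  show ?case
  proof (cases "z \<in> set xs")
    case True
    then obtain i where i: "i < length xs" "xs ! i = z" by (auto simp: in_set_conv_nth)
    let ?ys = "take (Suc i) xs"
    have len: "length ?ys = Suc i" using i by simp
    have "ispath E ?ys a z"
      unfolding ispath_def
    proof (intro conjI allI impI)
      show "distinct ?ys" using xs by (simp add: ispath_def)
      show "?ys \<noteq> []" using i by (cases xs) auto
      show "?ys ! 0 = a" using xs by (simp add: ispath_def)
      show "?ys ! (length ?ys - 1) = z" using len i by simp
      fix j assume "Suc j < length ?ys"
      then show "{?ys ! j, ?ys ! Suc j} \<in> E" using xs len i by (simp add: ispath_def)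
    qed
    then show ?thesis by blast
  next
    case False
    let ?ys = "xs @ [z]"
    have "ispath E ?ys a z"
      unfolding ispath_def
    proof (intro conjI allI impI)
      show "distinct ?ys" using xs False by (simp add: ispath_def)
      show "?ys \<noteq> []" by simp
      show "?ys ! 0 = a" using xs by (simp add: ispath_def nth_append)
      show "?ys ! (length ?ys - 1) = z" by simp
      fix i assume "Suc i < length ?ys"
      then have "Suc i < length xs \<or> Suc i = length xs" by auto
      then show "{?ys ! i, ?ys ! Suc i} \<in> E"
      proof
        assume "Suc i < length xs"
        then show ?thesis using xs by (simp add: ispath_def nth_append)
      next
        assume h: "Suc i = length xs"
        then have "i = length xs - 1" by simp
        then have "?ys ! i = y" "?ys ! Suc i = z" using xs h
          by (auto simp: ispath_def nth_append)
        then show ?thesis using yz by simp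
      qed
    qed
    then show ?thesis by blast
  qed
qed

lemma cycle_from_path:
  assumes p: "ispath E' xs c1 c2" and ne: "c1 \<noteq> c2"
    and avoid: "\<forall>e\<in>E'. r \<notin> e" and sub: "E' \<subseteq> E"
    and e1: "{r, c1} \<in> E" and e2: "{r, c2} \<in> E"
  shows "has_cycle E"
proof -
  have len: "length xs \<ge> 2"
  proof (rule ccontr)
    assume "\<not> ?thesis"
    moreover have "length xs > 0" using p by (simp add: ispath_def)
    ultimately have "length xs = 1" by linarith
    with p ne show False by (auto simp: ispath_def)
  qed
  have rnot: "r \<notin> set xs"
  proof
    assume "r \<in> set xs"
    then obtain j where j: "j < length xs" "xs ! j = r" by (auto simp: in_set_conv_nth)
    show False
    proof (cases "Suc j < length xs")
      case True
      then have "{xs ! j, xs ! Suc j} \<in> E'" using p by (simp add: ispath_def)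
      with avoid j show False by auto
    next
      case False
      then have "Suc (j - 1) < length xs" "j \<ge> 1" using j len by auto
      then have "{xs ! (j - 1), xs ! Suc (j - 1)} \<in> E'" using p unfolding ispath_def by blast
      with avoid j \<open>j \<ge> 1\<close> show False by auto
    qed
  qed
  let ?ys = "r # xs"
  have "length ?ys \<ge> 3" "distinct ?ys" using len rnot p by (auto simp: ispath_def)
  moreover have "\<forall>i < length ?ys. {?ys ! i, ?ys ! ((i + 1) mod length ?ys)} \<in> E"
  proof (intro allI impI)
    fix i assume i: "i < length ?ys"
    consider "i = 0" | "0 < i" "i < length xs" | "i = length xs" using i by fastforce
    then show "{?ys ! i, ?ys ! ((i + 1) mod length ?ys)} \<in> E"
    proof cases
      case 1
      then show ?thesis using len e1 p by (simp add: ispath_def)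
    next
      case 2
      then have "Suc (i - 1) < length xs" by simp
      then have "{xs ! (i - 1), xs ! Suc (i - 1)} \<in> E'" using p by (simp add: ispath_def)
      moreover have "?ys ! i = xs ! (i - 1)" "?ys ! ((i + 1) mod length ?ys) = xs ! Suc (i - 1)"
        using 2 by auto
      ultimately show ?thesis using sub by auto
    next
      case 3
      then have "?ys ! i = c2" using p len by (cases xs) (auto simp: ispath_def)
      moreover have "(i + 1) mod length ?ys = 0" using 3 by simp
      ultimately show ?thesis using e2 by (simp add: insert_commute)
    qed
  qed
  ultimately show ?thesis unfolding has_cycle_def by blast
qed

lemma cycle_rotate:
  assumes "length xs \<ge> 3" "distinct xs" "\<forall>i < length xs. {xs ! i, xs ! ((i + 1) mod length xs)} \<in> E"
  shows "\<forall>i < length (rotate p xs). {rotate p xs ! i, rotate p xs ! ((i + 1) mod length (rotate p xs))} \<in> E"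
proof (intro allI impI)
  fix i assume i: "i < length (rotate p xs)"
  let ?L = "length xs"
  have L: "?L > 0" using assms(1) by linarith
  let ?q = "(p + i) mod ?L"
  have "rotate p xs ! i = xs ! ?q" using i by (simp add: nth_rotate)
  moreover have "rotate p xs ! ((i + 1) mod ?L) = xs ! ((p + (i + 1) mod ?L) mod ?L)"
    using L by (simp add: nth_rotate)
  moreover have "(p + (i + 1) mod ?L) mod ?L = (?q + 1) mod ?L"
    by (simp only: mod_add_right_eq mod_add_left_eq add.assoc)
  moreover have "?q < ?L" using L by simp
  ultimately show "{rotate p xs ! i, rotate p xs ! ((i + 1) mod length (rotate p xs))} \<in> E"
    using assms(3) by simp
qed

definition star :: "nat \<Rightarrow> nat set \<Rightarrow> nat set set" where
  "star r C = (\<lambda>c. {r, c}) ` C"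

lemma cycle_split:
  assumes cyc: "has_cycle (E' \<union> star r C)" and nc: "\<not> has_cycle E'"
    and avoid: "\<forall>e\<in>E'. r \<notin> e"
  shows "\<exists>c1 c2. c1 \<in> C \<and> c2 \<in> C \<and> c1 \<noteq> c2 \<and> conn E' c1 c2"
proof -
  let ?F = "E' \<union> star r C"
  obtain xs where xs: "length xs \<ge> 3" "distinct xs"
    "\<forall>i < length xs. {xs ! i, xs ! ((i + 1) mod length xs)} \<in> ?F"
    using cyc unfolding has_cycle_def by blast
  have xne: "xs \<noteq> []" using xs(1) by (cases xs) auto
  have Lpos: "0 < length xs" using xs(1) by linarith
  have L1: "1 < length xs" using xs(1) by linarith
  have ysc0: "{xs ! i, xs ! ((i + 1) mod length xs)} \<in> ?F" if "i < length xs" for i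
    using xs(3) that by blast
  have r_in: "r \<in> set xs"
  proof (rule ccontr)
    assume rn: "r \<notin> set xs"
    have "\<forall>i < length xs. {xs ! i, xs ! ((i + 1) mod length xs)} \<in> E'"
    proof (intro allI impI)
      fix i assume i: "i < length xs"
      have "length xs > 0" using i by linarith
      then have "(i + 1) mod length xs < length xs" by simp
      then have "xs ! i \<noteq> r" "xs ! ((i + 1) mod length xs) \<noteq> r" using rn i
        by (metis nth_mem)+
      moreover have "{xs ! i, xs ! ((i + 1) mod length xs)} \<in> ?F" using xs i by blast
      ultimately show "{xs ! i, xs ! ((i + 1) mod length xs)} \<in> E'"
        unfolding star_def by (auto simp: doubleton_eq_iff)
    qed
    with xs nc show False unfolding has_cycle_def by blast
  qed
  then obtain p where p: "p < length xs" "xs ! p = r" by (auto simp: in_set_conv_nth)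
  define ys where "ys = rotate p xs"
  let ?L = "length xs"
  have ysL: "length ys = ?L" and ysd: "distinct ys" using xs(2) by (simp_all add: ys_def)
  have ysc: "\<forall>i < ?L. {ys ! i, ys ! ((i + 1) mod ?L)} \<in> ?F"
    using cycle_rotate[OF xs(1) xs(2) xs(3), of p] by (simp add: ys_def)
  have y0: "ys ! 0 = r"
  proof -
    have "length xs > 0" using p by linarith
    then have "ys ! 0 = xs ! ((p + 0) mod length xs)" unfolding ys_def by (rule nth_rotate)
    then show ?thesis using p by simp
  qed
  have ynr: "ys ! j \<noteq> r" if "0 < j" "j < ?L" for j
  proof
    assume "ys ! j = r"
    then have "ys ! j = ys ! 0" using y0 by simp
    moreover have "0 < length ys" using that ysL by linarith
    ultimately have "j = 0" using ysd that ysL nth_eq_iff_index_eq[of ys j 0] by simp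
    then show False using that by simp
  qed
  have c1: "ys ! 1 \<in> C"
  proof -
    have "{ys ! 0, ys ! ((0 + 1) mod ?L)} \<in> ?F" using ysc Lpos by blast
    then have "{ys ! 0, ys ! 1} \<in> ?F" using L1 by simp
    moreover have "ys ! 1 \<noteq> r" using ynr[of 1] xs(1) by simp
    ultimately show ?thesis using y0 avoid unfolding star_def by (auto simp: doubleton_eq_iff)
  qed
  have c2: "ys ! (?L - 1) \<in> C"
  proof -
    have "?L - 1 < ?L" using Lpos by simp
    then have "{ys ! (?L - 1), ys ! ((?L - 1 + 1) mod ?L)} \<in> ?F" using ysc by blast
    then have "{ys ! (?L - 1), ys ! 0} \<in> ?F" using Lpos by simp
    moreover have "ys ! (?L - 1) \<noteq> r" using ynr[of "?L - 1"] xs(1) by simp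
    ultimately show ?thesis using y0 avoid unfolding star_def by (auto simp: doubleton_eq_iff)
  qed
  have ne: "ys ! 1 \<noteq> ys ! (?L - 1)"
    using ysd ysL xs(1) by (simp add: nth_eq_iff_index_eq)
  have path: "conn E' (ys ! 1) (ys ! j)" if "1 \<le> j" "j < ?L" for j
    using that
  proof (induction j)
    case 0 then show ?case by simp
  next
    case (Suc j)
    show ?case
    proof (cases "j = 0")
      case True then show ?thesis by simp
    next
      case False
      then have ih: "conn E' (ys ! 1) (ys ! j)" using Suc by simp
      have jl: "j < ?L" "Suc j < ?L" using Suc.prems by auto
      have "{ys ! j, ys ! ((j + 1) mod ?L)} \<in> ?F" using ysc jl(1) by blast
      then have "{ys ! j, ys ! Suc j} \<in> ?F" using jl(2) by simp
      moreover have "ys ! j \<noteq> r" "ys ! Suc j \<noteq> r" using ynr False Suc by auto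
      ultimately have "{ys ! j, ys ! Suc j} \<in> E'" unfolding star_def by (auto simp: doubleton_eq_iff)
      then show ?thesis using ih by (meson conn_edge conn_trans)
    qed
  qed
  have "conn E' (ys ! 1) (ys ! (?L - 1))" using path[of "?L - 1"] xs(1) by simp
  with c1 c2 ne show ?thesis by blast
qed



definition good :: "nat set \<Rightarrow> nat set \<Rightarrow> nat set set set" where
  "good X Ro = {E. simple_graph (X \<union> Ro) E \<and> \<not> has_cycle E
      \<and> (\<forall>v \<in> X \<union> Ro. \<exists>!\<rho>. \<rho> \<in> Ro \<and> conn E v \<rho>)}"

lemma sg_edge: "simple_graph V E \<Longrightarrow> e \<in> E \<Longrightarrow> \<exists>u v. u \<noteq> v \<and> e = {u, v} \<and> u \<in> V \<and> v \<in> V"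
  unfolding simple_graph_def by blast

lemma uniq_root:
  assumes "E \<in> good X Ro" "v \<in> X \<union> Ro" "\<rho>1 \<in> Ro" "conn E v \<rho>1" "\<rho>2 \<in> Ro" "conn E v \<rho>2"
  shows "\<rho>1 = \<rho>2"
  using assms unfolding good_def by blast

lemma avoid_conn:
  assumes "conn E v u" "\<not> conn E v r"
  shows "conn {e \<in> E. r \<notin> e} v u"
  using assms
proof (induction rule: rtranclp_induct)
  case base then show ?case by simp
next
  case (step y z)
  have "y \<noteq> r" using step by blast
  moreover have "z \<noteq> r" using step by (meson rtranclp.rtrancl_into_rtrancl)
  moreover have "{y, z} \<in> E" using step(2) by (simp add: adj_def)
  ultimately have "{y, z} \<in> {e \<in> E. r \<notin> e}" by simp
  then show ?case using step by (meson conn_edge conn_trans)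
qed

lemma to_root_conn:
  assumes "conn E v r"
  shows "v = r \<or> (\<exists>c. {r, c} \<in> E \<and> conn {e \<in> E. r \<notin> e} v c)"
  using assms
proof (induction rule: converse_rtranclp_induct)
  case base then show ?case by simp
next
  case (step v u)
  have vu: "{v, u} \<in> E" using step(1) by (simp add: adj_def)
  from step(3) show ?case
  proof
    assume "u = r"
    then have "{r, v} \<in> E" using vu by (simp add: insert_commute)
    then show ?thesis by blast
  next
    assume "\<exists>c. {r, c} \<in> E \<and> conn {e \<in> E. r \<notin> e} u c"
    then obtain c where c: "{r, c} \<in> E" "conn {e \<in> E. r \<notin> e} u c" by blast
    show ?thesis
    proof (cases "v = r")
      case True then show ?thesis by simp
    next
      case False
      show ?thesis
      proof (cases "u = r")
        case True
        then have "{r, v} \<in> E" using vu by (simp add: insert_commute)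
        then show ?thesis by blast
      next
        case False
        with \<open>v \<noteq> r\<close> vu have "{v, u} \<in> {e \<in> E. r \<notin> e}" by simp
        then have "conn {e \<in> E. r \<notin> e} v c" using c(2) by (meson conn_edge conn_trans)
        then show ?thesis using c(1) by blast
      qed
    qed
  qed
qed

lemma fwd:
  assumes disj: "X \<inter> Ro = {}" and r: "r \<in> Ro" and E: "E \<in> good X Ro"
  defines "C \<equiv> {c. {r, c} \<in> E}" and "E' \<equiv> {e \<in> E. r \<notin> e}"
  shows "C \<subseteq> X" and "E' \<in> good (X - C) (Ro - {r} \<union> C)" and "E = E' \<union> star r C"
proof -
  have sg: "simple_graph (X \<union> Ro) E" and nc: "\<not> has_cycle E"
    and un: "\<forall>v \<in> X \<union> Ro. \<exists>!\<rho>. \<rho> \<in> Ro \<and> conn E v \<rho>"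
    using E unfolding good_def by auto
  show CX: "C \<subseteq> X"
  proof
    fix c assume "c \<in> C"
    then have e: "{r, c} \<in> E" by (simp add: C_def)
    then obtain a b where ab: "a \<noteq> b" "{r, c} = {a, b}" "a \<in> X \<union> Ro" "b \<in> X \<union> Ro"
      using sg_edge[OF sg] by blast
    then have cV: "c \<in> X \<union> Ro" and cr: "c \<noteq> r" by (auto simp: doubleton_eq_iff)
    show "c \<in> X"
    proof (rule ccontr)
      assume "c \<notin> X"
      then have "c \<in> Ro" using cV by simp
      moreover have "conn E r c" using e by (rule conn_edge)
      ultimately have "c = r" using uniq_root[OF E _ r _ _] r by blast
      with cr show False by simp
    qed
  qed
  have rX: "r \<notin> X" using disj r by blast
  have Vs: "(X - C) \<union> (Ro - {r} \<union> C) = (X \<union> Ro) - {r}" using CX rX by blast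
  have sg': "simple_graph ((X \<union> Ro) - {r}) E'"
    unfolding simple_graph_def
  proof
    fix e assume "e \<in> E'"
    then have "e \<in> E" "r \<notin> e" by (auto simp: E'_def)
    then show "\<exists>u v. u \<noteq> v \<and> e = {u, v} \<and> u \<in> X \<union> Ro - {r} \<and> v \<in> X \<union> Ro - {r}"
      using sg_edge[OF sg] by blast
  qed
  have nc': "\<not> has_cycle E'" using nc has_cycle_mono[of E' E] by (auto simp: E'_def)
  have sub: "E' \<subseteq> E" by (auto simp: E'_def)
  have avoid: "\<forall>e\<in>E'. r \<notin> e" by (simp add: E'_def)
  have un': "\<exists>!\<rho>. \<rho> \<in> Ro - {r} \<union> C \<and> conn E' v \<rho>" if v: "v \<in> (X \<union> Ro) - {r}" for v
  proof -
    obtain \<rho> where \<rho>: "\<rho> \<in> Ro" "conn E v \<rho>" using un v by blast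
    have ex: "\<exists>\<rho>'. \<rho>' \<in> Ro - {r} \<union> C \<and> conn E' v \<rho>'"
    proof (cases "\<rho> = r")
      case False
      have "\<not> conn E v r" using uniq_root[OF E _ \<rho>(1) \<rho>(2) r] v False by blast
      then have "conn E' v \<rho>" using avoid_conn[OF \<rho>(2)] by (simp add: E'_def)
      then show ?thesis using \<rho> False by blast
    next
      case True
      then have "v = r \<or> (\<exists>c. {r, c} \<in> E \<and> conn E' v c)"
        using to_root_conn[of E v r] \<rho> by (simp add: E'_def)
      then show ?thesis using v by (auto simp: C_def)
    qed
    have "\<rho>1 = \<rho>2" if a: "\<rho>1 \<in> Ro - {r} \<union> C" "conn E' v \<rho>1" and b: "\<rho>2 \<in> Ro - {r} \<union> C" "conn E' v \<rho>2"
      for \<rho>1 \<rho>2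
    proof (rule ccontr)
      assume ne: "\<rho>1 \<noteq> \<rho>2"
      have c12: "conn E' \<rho>1 \<rho>2" using a b conn_sym conn_trans by metis
      then have c12E: "conn E \<rho>1 \<rho>2" using conn_mono sub by blast
      have C_r: "conn E c r" if "c \<in> C" for c using that conn_edge conn_sym by (simp add: C_def)
      have RV: "Ro \<subseteq> X \<union> Ro" by blast
      show False
      proof (cases "\<rho>1 \<in> C")
        case c1: True
        show ?thesis
        proof (cases "\<rho>2 \<in> C")
          case True
          obtain xs where "ispath E' xs \<rho>1 \<rho>2" using conn_path[OF c12] by blast
          then have "has_cycle E"
            using cycle_from_path[OF _ ne avoid sub] c1 True by (simp add: C_def)
          with nc show False by simp
        next
          case False
          then have "\<rho>2 \<in> Ro" "\<rho>2 \<noteq> r" using b by auto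
          moreover have "conn E \<rho>2 r" using C_r[OF c1] c12E conn_sym conn_trans by metis
          ultimately show False using uniq_root[OF E _ _ _ r, of \<rho>2 \<rho>2] by blast
        qed
      next
        case c1: False
        then have r1: "\<rho>1 \<in> Ro" "\<rho>1 \<noteq> r" using a by auto
        show ?thesis
        proof (cases "\<rho>2 \<in> C")
          case True
          have "conn E \<rho>1 r" using C_r[OF True] c12E conn_trans by metis
          then show False using uniq_root[OF E _ _ _ r, of \<rho>1 \<rho>1] r1 by blast
        next
          case False
          then have "\<rho>2 \<in> Ro" using b by auto
          then show False using uniq_root[OF E _ r1(1) _ _ c12E] r1 ne by blast
        qed
      qed
    qed
    with ex show ?thesis by blast
  qed
  show "E' \<in> good (X - C) (Ro - {r} \<union> C)"
    unfolding good_def using Vs sg' nc' un' by simp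
  show "E = E' \<union> star r C"
  proof
    show "E \<subseteq> E' \<union> star r C"
    proof
      fix e assume e: "e \<in> E"
      show "e \<in> E' \<union> star r C"
      proof (cases "r \<in> e")
        case False then show ?thesis using e by (simp add: E'_def)
      next
        case True
        obtain a b where "a \<noteq> b" "e = {a, b}" using sg_edge[OF sg e] by blast
        with True obtain c where "e = {r, c}" by blast
        then show ?thesis using e by (auto simp: star_def C_def)
      qed
    qed
    show "E' \<union> star r C \<subseteq> E" by (auto simp: E'_def star_def C_def)
  qed
qed



lemma bwd:
  assumes disj: "X \<inter> Ro = {}" and r: "r \<in> Ro" and CX: "C \<subseteq> X"
    and E': "E' \<in> good (X - C) (Ro - {r} \<union> C)"
  defines "E \<equiv> E' \<union> star r C"
  shows "E \<in> good X Ro" and "{c. {r, c} \<in> E} = C" and "{e \<in> E. r \<notin> e} = E'"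
    and "\<And>v \<rho>. \<rho> \<in> Ro - {r} \<Longrightarrow> conn E v \<rho> \<Longrightarrow> conn E' v \<rho>"
proof -
  let ?Ro' = "Ro - {r} \<union> C"
  have rX: "r \<notin> X" using disj r by blast
  have Vs: "(X - C) \<union> ?Ro' = (X \<union> Ro) - {r}" using CX rX by blast
  have sg': "simple_graph ((X \<union> Ro) - {r}) E'" and nc': "\<not> has_cycle E'"
    and un': "\<forall>v \<in> (X \<union> Ro) - {r}. \<exists>!\<rho>. \<rho> \<in> ?Ro' \<and> conn E' v \<rho>"
  proof -
    have "simple_graph ((X - C) \<union> ?Ro') E' \<and> \<not> has_cycle E' \<and> (\<forall>v \<in> (X - C) \<union> ?Ro'. \<exists>!\<rho>. \<rho> \<in> ?Ro' \<and> conn E' v \<rho>)"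
      using E' unfolding good_def by simp
    then show "simple_graph ((X \<union> Ro) - {r}) E'" "\<not> has_cycle E'" "\<forall>v \<in> (X \<union> Ro) - {r}. \<exists>!\<rho>. \<rho> \<in> ?Ro' \<and> conn E' v \<rho>"
      unfolding Vs by simp_all
  qed
  have avoid: "\<forall>e\<in>E'. r \<notin> e"
  proof
    fix e assume "e \<in> E'"
    then obtain u v where "e = {u, v}" "u \<in> X \<union> Ro - {r}" "v \<in> X \<union> Ro - {r}"
      using sg' unfolding simple_graph_def by meson
    then show "r \<notin> e" by simp
  qed
  have rC: "r \<notin> C" using CX rX by blast
  have sub: "E' \<subseteq> E" by (simp add: E_def)
  define rt where "rt u = (THE \<rho>. \<rho> \<in> ?Ro' \<and> conn E' u \<rho>)" for u
  have rt: "rt u \<in> ?Ro' \<and> conn E' u (rt u)" if "u \<in> (X \<union> Ro) - {r}" for u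
  proof -
    have "\<exists>!\<rho>. \<rho> \<in> ?Ro' \<and> conn E' u \<rho>" using bspec[OF un' that] .
    then show ?thesis unfolding rt_def by (rule theI')
  qed
  have rt_eq: "rt u = \<rho>" if "u \<in> (X \<union> Ro) - {r}" "\<rho> \<in> ?Ro'" "conn E' u \<rho>" for u \<rho>
  proof -
    have "\<exists>!\<rho>. \<rho> \<in> ?Ro' \<and> conn E' u \<rho>" using bspec[OF un' that(1)] .
    then show ?thesis unfolding rt_def using that(2,3) by (intro the1_equality) auto
  qed
  define f where "f u = (if u = r then r else if rt u \<in> C then r else rt u)" for u
  have sgE: "simple_graph (X \<union> Ro) E"
    unfolding simple_graph_def E_def
  proof
    fix e assume "e \<in> E' \<union> star r C"
    then show "\<exists>u v. u \<noteq> v \<and> e = {u, v} \<and> u \<in> X \<union> Ro \<and> v \<in> X \<union> Ro"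
    proof
      assume "e \<in> E'"
      then obtain u v where "u \<noteq> v" "e = {u, v}" "u \<in> X \<union> Ro - {r}" "v \<in> X \<union> Ro - {r}"
        using sg' unfolding simple_graph_def by meson
      then show ?thesis by auto
    next
      assume "e \<in> star r C"
      then obtain c where c: "c \<in> C" "e = {r, c}" by (auto simp: star_def)
      then have "r \<noteq> c" "c \<in> X \<union> Ro" "r \<in> X \<union> Ro" using rC r CX by auto
      then show ?thesis using c(2) by blast
    qed
  qed
  have fin: "f u = f w" if "conn E u w" "u \<in> X \<union> Ro" for u w
    using that
  proof (induction rule: rtranclp_induct)
    case base then show ?case by simp
  next
    case (step y z)
    have yV: "y \<in> X \<union> Ro" using conn_in_V[OF step(1) sgE step.prems] .
    have yz: "{y, z} \<in> E" using step(2) by (simp add: adj_def)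
    have "f y = f z"
    proof (cases "{y, z} \<in> E'")
      case True
      then obtain a b where "a \<noteq> b" "{y, z} = {a, b}" "a \<in> X \<union> Ro - {r}" "b \<in> X \<union> Ro - {r}"
        using sg' unfolding simple_graph_def by meson
      then have yV': "y \<in> X \<union> Ro - {r}" and zV': "z \<in> X \<union> Ro - {r}" by (auto simp: doubleton_eq_iff)
      have "conn E' z y" using conn_edge[OF True] by (rule conn_sym)
      then have "conn E' z (rt y)" using rt[OF yV'] conn_trans by blast
      then have "rt z = rt y" using rt_eq[OF zV'] rt[OF yV'] by blast
      then show ?thesis using yV' zV' by (simp add: f_def)
    next
      case False
      then have "{y, z} \<in> star r C" using yz by (simp add: E_def)
      then obtain c where c: "c \<in> C" "{y, z} = {r, c}" by (auto simp: star_def)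
      have cV: "c \<in> X \<union> Ro - {r}" using c(1) CX rC by blast
      have "rt c = c" using rt_eq[OF cV, of c] c(1) by simp
      then have fc: "f c = r" using c(1) rC by (auto simp: f_def)
      have fr: "f r = r" by (simp add: f_def)
      from c(2) have "(y = r \<and> z = c) \<or> (y = c \<and> z = r)" by (auto simp: doubleton_eq_iff)
      then show ?thesis using fc fr by auto
    qed
    then show ?case using step.IH step.prems by simp
  qed
  have froot: "f \<rho> = \<rho>" if "\<rho> \<in> Ro" for \<rho>
  proof (cases "\<rho> = r")
    case True then show ?thesis by (simp add: f_def)
  next
    case False
    then have "\<rho> \<notin> C" "\<rho> \<in> X \<union> Ro - {r}" "\<rho> \<in> ?Ro'" using that disj CX by auto
    then have "rt \<rho> = \<rho>" using rt_eq by blast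
    then show ?thesis using False \<open>\<rho> \<notin> C\<close> by (simp add: f_def)
  qed
  have exE: "\<exists>\<rho>. \<rho> \<in> Ro \<and> conn E v \<rho>" if "v \<in> X \<union> Ro" for v
  proof (cases "v = r")
    case True then show ?thesis using r by blast
  next
    case False
    then have vV: "v \<in> X \<union> Ro - {r}" using that by simp
    have c1: "conn E v (rt v)" using rt[OF vV] conn_mono sub by blast
    show ?thesis
    proof (cases "rt v \<in> C")
      case True
      then have "{r, rt v} \<in> E" by (auto simp: E_def star_def)
      then have "conn E (rt v) r" using conn_edge conn_sym by blast
      then have "conn E v r" using c1 conn_trans by blast
      then show ?thesis using r by blast
    next
      case False
      then have "rt v \<in> Ro" using rt[OF vV] by blast
      then show ?thesis using c1 by blast
    qed
  qed
  have unE: "\<rho>1 = \<rho>2" if "v \<in> X \<union> Ro" "\<rho>1 \<in> Ro" "conn E v \<rho>1" "\<rho>2 \<in> Ro" "conn E v \<rho>2" for v \<rho>1 \<rho>2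
  proof -
    have "f v = f \<rho>1" "f v = f \<rho>2" using fin[OF that(3) that(1)] fin[OF that(5) that(1)] by auto
    then show ?thesis using froot[OF that(2)] froot[OF that(4)] by simp
  qed
  have ncE: "\<not> has_cycle E"
  proof
    assume "has_cycle E"
    then have "has_cycle (E' \<union> star r C)" by (simp add: E_def)
    then obtain c1 c2 where cc: "c1 \<in> C" "c2 \<in> C" "c1 \<noteq> c2" "conn E' c1 c2"
      using cycle_split[OF _ nc' avoid] by blast
    have c1V: "c1 \<in> X \<union> Ro - {r}" "c2 \<in> X \<union> Ro - {r}" using cc CX rC by auto
    have "rt c1 = c1" "rt c1 = c2" using rt_eq[OF c1V(1)] cc by auto
    with cc(3) show False by simp
  qed
  show "E \<in> good X Ro"
    unfolding good_def using sgE ncE exE unE by blast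
  show "{c. {r, c} \<in> E} = C"
  proof
    show "{c. {r, c} \<in> E} \<subseteq> C"
    proof
      fix c assume "c \<in> {c. {r, c} \<in> E}"
      then have "{r, c} \<in> E' \<union> star r C" by (simp add: E_def)
      with avoid show "c \<in> C" by (auto simp: star_def doubleton_eq_iff)
    qed
    show "C \<subseteq> {c. {r, c} \<in> E}" by (auto simp: E_def star_def)
  qed
  show "{e \<in> E. r \<notin> e} = E'" using avoid by (auto simp: E_def star_def)
  fix v \<rho> assume \<rho>: "\<rho> \<in> Ro - {r}" and c: "conn E v \<rho>"
  have \<rho>V: "\<rho> \<in> X \<union> Ro - {r}" "\<rho> \<in> ?Ro'" using \<rho> by auto
  have vV: "v \<in> X \<union> Ro"
    using conn_in_V[OF conn_sym[OF c] sgE] \<rho> by blast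
  have "f v = \<rho>" using fin[OF c vV] froot \<rho> by simp
  then have "v \<noteq> r" "rt v = \<rho>" using \<rho> by (auto simp: f_def split: if_splits)
  then show "conn E' v \<rho>" using rt[of v] vV by auto
qed



lemma good_fin: "finite X \<Longrightarrow> finite Ro \<Longrightarrow> finite (good X Ro)"
proof -
  assume f: "finite X" "finite Ro"
  have "good X Ro \<subseteq> Pow (Pow (X \<union> Ro))"
  proof
    fix E assume "E \<in> good X Ro"
    then have sg: "simple_graph (X \<union> Ro) E" by (simp add: good_def)
    have "e \<subseteq> X \<union> Ro" if e: "e \<in> E" for e
    proof -
      obtain u v where "e = {u, v}" "u \<in> X \<union> Ro" "v \<in> X \<union> Ro"
        using sg e unfolding simple_graph_def by meson
      then show ?thesis by simp
    qed
    then show "E \<in> Pow (Pow (X \<union> Ro))" by auto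
  qed
  moreover have "finite (Pow (Pow (X \<union> Ro)))" using f by simp
  ultimately show ?thesis by (rule finite_subset)
qed

definition fmap :: "nat \<Rightarrow> nat set \<times> nat set set \<Rightarrow> nat set set" where
  "fmap r p = snd p \<union> star r (fst p)"

lemma bij_good:
  assumes disj: "X \<inter> Ro = {}" and r: "r \<in> Ro"
  shows "bij_betw (fmap r) (SIGMA C:Pow X. good (X - C) (Ro - {r} \<union> C)) (good X Ro)"
proof (rule bij_betw_byWitness[where f' = "\<lambda>E. ({c. {r, c} \<in> E}, {e \<in> E. r \<notin> e})"])
  show "\<forall>a\<in>SIGMA C:Pow X. good (X - C) (Ro - {r} \<union> C).
      ({c. {r, c} \<in> fmap r a}, {e \<in> fmap r a. r \<notin> e}) = a"
  proof
    fix a assume a: "a \<in> (SIGMA C:Pow X. good (X - C) (Ro - {r} \<union> C))"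
    obtain C E' where aa: "a = (C, E')" by (cases a)
    with a have "C \<subseteq> X" "E' \<in> good (X - C) (Ro - {r} \<union> C)" by auto
    from bwd[OF disj r this] show "({c. {r, c} \<in> fmap r a}, {e \<in> fmap r a. r \<notin> e}) = a"
      by (simp add: aa fmap_def)
  qed
  show "\<forall>E\<in>good X Ro. fmap r ({c. {r, c} \<in> E}, {e \<in> E. r \<notin> e}) = E"
    using fwd(3)[OF disj r] by (simp add: fmap_def)
  show "fmap r ` (SIGMA C:Pow X. good (X - C) (Ro - {r} \<union> C)) \<subseteq> good X Ro"
  proof
    fix E assume "E \<in> fmap r ` (SIGMA C:Pow X. good (X - C) (Ro - {r} \<union> C))"
    then obtain C E' where "C \<subseteq> X" "E' \<in> good (X - C) (Ro - {r} \<union> C)" "E = fmap r (C, E')"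
      by auto
    then show "E \<in> good X Ro" using bwd(1)[OF disj r] by (simp add: fmap_def)
  qed
  show "(\<lambda>E. ({c. {r, c} \<in> E}, {e \<in> E. r \<notin> e})) ` good X Ro
      \<subseteq> (SIGMA C:Pow X. good (X - C) (Ro - {r} \<union> C))"
    using fwd(1,2)[OF disj r] by auto
qed

lemma card_good_rec:
  assumes fin: "finite X" "finite Ro" and disj: "X \<inter> Ro = {}" and r: "r \<in> Ro"
  shows "card (good X Ro) = (\<Sum>C\<in>Pow X. card (good (X - C) (Ro - {r} \<union> C)))"
proof -
  have "card (good X Ro) = card (SIGMA C:Pow X. good (X - C) (Ro - {r} \<union> C))"
    using bij_betw_same_card[OF bij_good[OF disj r]] by simp
  also have "\<dots> = (\<Sum>C\<in>Pow X. card (good (X - C) (Ro - {r} \<union> C)))"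
  proof (rule card_SigmaI)
    show "finite (Pow X)" using fin by simp
    show "\<forall>C\<in>Pow X. finite (good (X - C) (Ro - {r} \<union> C))"
    proof
      fix C assume "C \<in> Pow X"
      then have "finite C" using fin by (auto intro: finite_subset)
      then show "finite (good (X - C) (Ro - {r} \<union> C))" using fin good_fin by simp
    qed
  qed
  finally show ?thesis .
qed

definition goodx :: "nat set \<Rightarrow> nat set \<Rightarrow> nat \<Rightarrow> nat \<Rightarrow> nat set set set" where
  "goodx X Ro x \<rho> = {E \<in> good X Ro. conn E x \<rho>}"

lemma card_goodx_rec:
  assumes fin: "finite X" "finite Ro" and disj: "X \<inter> Ro = {}" and r: "r \<in> Ro"
    and x: "x \<in> X" and \<rho>: "\<rho> \<in> Ro" "\<rho> \<noteq> r"
  shows "card (goodx X Ro x \<rho>) = (\<Sum>C\<in>Pow (X - {x}). card (goodx (X - C) (Ro - {r} \<union> C) x \<rho>))"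
proof -
  let ?A = "SIGMA C:Pow (X - {x}). goodx (X - C) (Ro - {r} \<union> C) x \<rho>"
  have sub: "?A \<subseteq> (SIGMA C:Pow X. good (X - C) (Ro - {r} \<union> C))"
    by (auto simp: goodx_def)
  have img: "fmap r ` ?A = goodx X Ro x \<rho>"
  proof
    show "fmap r ` ?A \<subseteq> goodx X Ro x \<rho>"
    proof
      fix E assume "E \<in> fmap r ` ?A"
      then obtain C E' where CE: "C \<subseteq> X - {x}" "E' \<in> good (X - C) (Ro - {r} \<union> C)"
        "conn E' x \<rho>" "E = fmap r (C, E')"
        by (auto simp: goodx_def)
      have CX: "C \<subseteq> X" using CE(1) by blast
      have "E \<in> good X Ro" using bwd(1)[OF disj r CX CE(2)] CE(4) by (simp add: fmap_def)
      moreover have "conn E x \<rho>" using conn_mono[OF CE(3)] CE(4) by (auto simp: fmap_def)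
      ultimately show "E \<in> goodx X Ro x \<rho>" by (simp add: goodx_def)
    qed
    show "goodx X Ro x \<rho> \<subseteq> fmap r ` ?A"
    proof
      fix E assume E: "E \<in> goodx X Ro x \<rho>"
      then have Eg: "E \<in> good X Ro" and cx: "conn E x \<rho>" by (auto simp: goodx_def)
      define C where "C = {c. {r, c} \<in> E}"
      define E' where "E' = {e \<in> E. r \<notin> e}"
      have CX: "C \<subseteq> X" and E'g: "E' \<in> good (X - C) (Ro - {r} \<union> C)" and EE: "E = E' \<union> star r C"
        using fwd[OF disj r Eg] by (simp_all add: C_def E'_def)
      have xC: "x \<notin> C"
      proof
        assume "x \<in> C"
        then have "conn E x r" using conn_sym[OF conn_edge] by (simp add: C_def)
        then have "\<rho> = r" using uniq_root[OF Eg _ \<rho>(1) cx r] x by blast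
        with \<rho>(2) show False by simp
      qed
      have "conn E' x \<rho>" using bwd(4)[OF disj r CX E'g, of \<rho> x] \<rho> cx EE by simp
      then have "(C, E') \<in> ?A" using CX xC E'g by (auto simp: goodx_def)
      moreover have "E = fmap r (C, E')" using EE by (simp add: fmap_def)
      ultimately show "E \<in> fmap r ` ?A" by blast
    qed
  qed
  have bij: "bij_betw (fmap r) ?A (goodx X Ro x \<rho>)"
    by (rule bij_betw_subset[OF bij_good[OF disj r] sub img])
  have "card (goodx X Ro x \<rho>) = card ?A"
    using bij_betw_same_card[OF bij] by simp
  also have "\<dots> = (\<Sum>C\<in>Pow (X - {x}). card (goodx (X - C) (Ro - {r} \<union> C) x \<rho>))"
  proof (rule card_SigmaI)
    show "finite (Pow (X - {x}))" using fin by simp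
    show "\<forall>C\<in>Pow (X - {x}). finite (goodx (X - C) (Ro - {r} \<union> C) x \<rho>)"
    proof
      fix C assume "C \<in> Pow (X - {x})"
      then have "finite C" using fin by (auto intro: finite_subset)
      then have "finite (good (X - C) (Ro - {r} \<union> C))" using fin good_fin by simp
      then show "finite (goodx (X - C) (Ro - {r} \<union> C) x \<rho>)"
        by (rule finite_subset[rotated]) (auto simp: goodx_def)
    qed
  qed
  finally show ?thesis .
qed

lemma sum_Pow_card:
  assumes "finite X"
  shows "(\<Sum>C\<in>Pow X. g (card C)) = (\<Sum>i\<le>card X. (card X choose i) * g i)"
proof -
  have "(\<Sum>C\<in>Pow X. g (card C)) = (\<Sum>i\<le>card X. \<Sum>C\<in>{C \<in> Pow X. card C = i}. g (card C))"
    by (rule sum.group[symmetric]) (use assms card_mono in auto)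
  also have "\<dots> = (\<Sum>i\<le>card X. (card X choose i) * g i)"
  proof (rule sum.cong[OF refl])
    fix i
    have "(\<Sum>C\<in>{C \<in> Pow X. card C = i}. g (card C)) = (\<Sum>C\<in>{C \<in> Pow X. card C = i}. g i)"
      by simp
    also have "\<dots> = card {C \<in> Pow X. card C = i} * g i" by simp
    also have "{C \<in> Pow X. card C = i} = {C. C \<subseteq> X \<and> card C = i}" by auto
    finally show "(\<Sum>C\<in>{C \<in> Pow X. card C = i}. g (card C)) = (card X choose i) * g i"
      using n_subsets[OF assms] by simp
  qed
  finally show ?thesis .
qed



lemma binom1: "(\<Sum>i\<le>j. (j choose i) * (a::nat) ^ (j - i)) = (a + 1) ^ j"
  using binomial_ring[of 1 a j] by (simp add: add.commute)

lemma binom2: "(\<Sum>i\<le>j. i * (j choose i) * (a::nat) ^ (j - i)) = j * (a + 1) ^ (j - 1)"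
proof (cases j)
  case 0 then show ?thesis by simp
next
  case (Suc j')
  have "(\<Sum>i\<le>Suc j'. i * (Suc j' choose i) * a ^ (Suc j' - i))
      = (\<Sum>i\<le>j'. Suc i * (Suc j' choose Suc i) * a ^ (j' - i))"
    by (subst sum.atMost_Suc_shift) simp
  also have "\<dots> = (\<Sum>i\<le>j'. Suc j' * ((j' choose i) * a ^ (j' - i)))"
    by (rule sum.cong[OF refl]) (simp only: Suc_times_binomial mult.assoc)
  also have "\<dots> = Suc j' * (a + 1) ^ j'"
    by (simp only: sum_distrib_left[symmetric] binom1)
  finally show ?thesis using Suc by simp
qed

definition hh :: "nat \<Rightarrow> nat \<Rightarrow> nat" where
  "hh j s = (if j = 0 then 1 else s * (j + s) ^ (j - 1))"

lemma id_h:
  assumes s: "1 \<le> s" and j: "1 \<le> j"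
  shows "(\<Sum>i\<le>j. (j choose i) * hh (j - i) (s - 1 + i)) = s * (j + s) ^ (j - 1)"
proof -
  define a where "a = j + s - 1"
  have a1: "a \<ge> 1" using s j by (simp add: a_def)
  have tm: "a * hh (j - i) (s - 1 + i) = (s - 1 + i) * a ^ (j - i)" if i: "i \<le> j" for i
  proof (cases "i = j")
    case True then show ?thesis using s by (simp add: hh_def a_def)
  next
    case False
    then have ij: "i < j" using i by simp
    then have "j - i + (s - 1 + i) = a" using s by (simp add: a_def)
    moreover have "a * a ^ (j - i - 1) = a ^ (j - i)" using ij
      by (metis Suc_diff_Suc diff_Suc_1 power_Suc)
    ultimately show ?thesis using ij
      by (simp add: hh_def mult.left_commute)
  qed
  have "a * (\<Sum>i\<le>j. (j choose i) * hh (j - i) (s - 1 + i))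
      = (\<Sum>i\<le>j. (j choose i) * (a * hh (j - i) (s - 1 + i)))"
    by (simp add: sum_distrib_left mult.left_commute)
  also have "\<dots> = (\<Sum>i\<le>j. (j choose i) * ((s - 1 + i) * a ^ (j - i)))"
  proof (rule sum.cong[OF refl])
    fix i assume "i \<in> {..j}"
    then have "a * hh (j - i) (s - 1 + i) = (s - 1 + i) * a ^ (j - i)" using tm by simp
    then show "(j choose i) * (a * hh (j - i) (s - 1 + i)) = (j choose i) * ((s - 1 + i) * a ^ (j - i))"
      by (simp only:)
  qed
  also have "\<dots> = (s - 1) * (\<Sum>i\<le>j. (j choose i) * a ^ (j - i)) + (\<Sum>i\<le>j. i * (j choose i) * a ^ (j - i))"
    by (simp add: sum_distrib_left sum.distrib algebra_simps)
  also have "\<dots> = (s - 1) * (a + 1) ^ j + j * (a + 1) ^ (j - 1)"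
    by (simp only: binom1 binom2)
  also have "\<dots> = a * (s * (j + s) ^ (j - 1))"
  proof -
    obtain j' where j': "j = Suc j'" using j by (cases j) auto
    obtain s' where s': "s = Suc s'" using s by (cases s) auto
    have "a + 1 = j + s" using s by (simp add: a_def)
    then show ?thesis using j' s' a_def
      by (simp add: algebra_simps)
  qed
  finally show ?thesis using a1 by simp
qed

lemma id_g:
  assumes s: "1 \<le> s" and j: "1 \<le> j"
  shows "(\<Sum>i\<le>j - 1. (j - 1 choose i) * (j + s - 1) ^ (j - 1 - i)) = (j + s) ^ (j - 1)"
  using binom1[of "j - 1" "j + s - 1"] s by simp



lemma good_empty: "good {} {} = {{}}"
proof -
  have "E \<in> good {} {} \<longleftrightarrow> E = {}" for E
  proof
    assume "E \<in> good {} {}"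
    then have "simple_graph {} E" by (simp add: good_def)
    then show "E = {}" unfolding simple_graph_def by blast
  next
    assume "E = {}"
    moreover have "\<not> has_cycle {}"
    proof
      assume "has_cycle {}"
      then obtain xs where xs: "3 \<le> length xs" "\<forall>i<length xs. {xs ! i, xs ! ((i + 1) mod length xs)} \<in> ({}::nat set set)"
        unfolding has_cycle_def by blast
      have "0 < length xs" using xs(1) by linarith
      then show False using xs(2) by blast
    qed
    ultimately show "E \<in> good {} {}" by (simp add: good_def simple_graph_def)
  qed
  then show ?thesis by blast
qed

lemma good_noroot: "X \<noteq> {} \<Longrightarrow> good X {} = {}"
  unfolding good_def by auto

lemma card_good:
  assumes "finite X" "finite Ro" "X \<inter> Ro = {}"
  shows "card (good X Ro) = hh (card X) (card Ro)"
  using assms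
proof (induction "card X + card Ro" arbitrary: X Ro rule: less_induct)
  case less
  show ?case
  proof (cases "Ro = {}")
    case True
    show ?thesis
    proof (cases "X = {}")
      case True
      then show ?thesis using \<open>Ro = {}\<close> good_empty by (simp add: hh_def)
    next
      case False
      then have "card X \<noteq> 0" using less.prems by simp
      then show ?thesis using \<open>Ro = {}\<close> good_noroot[OF False] by (simp add: hh_def)
    qed
  next
    case False
    then obtain r where r: "r \<in> Ro" by blast
    let ?j = "card X" and ?s = "card Ro"
    have s1: "?s \<ge> 1" using r less.prems by (metis One_nat_def Suc_leI card_gt_0_iff empty_iff)
    have "card (good X Ro) = (\<Sum>C\<in>Pow X. card (good (X - C) (Ro - {r} \<union> C)))"
      using card_good_rec[OF less.prems r] .
    also have "\<dots> = (\<Sum>C\<in>Pow X. hh (?j - card C) (?s - 1 + card C))"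
    proof (rule sum.cong[OF refl])
      fix C assume "C \<in> Pow X"
      then have CX: "C \<subseteq> X" by simp
      have fC: "finite C" using CX less.prems(1) by (rule finite_subset)
      have c1: "card (X - C) = ?j - card C" using CX fC by (simp add: card_Diff_subset)
      have dj: "(Ro - {r}) \<inter> C = {}" using CX less.prems(3) by blast
      have c2: "card (Ro - {r} \<union> C) = ?s - 1 + card C"
        using card_Un_disjoint[OF _ fC dj] less.prems(2) r by simp
      have le: "card C \<le> ?j" using less.prems(1) CX by (rule card_mono)
      have "card (X - C) + card (Ro - {r} \<union> C) < card X + card Ro"
        using c1 c2 le s1 by linarith
      moreover have "finite (X - C)" "finite (Ro - {r} \<union> C)" "(X - C) \<inter> (Ro - {r} \<union> C) = {}"
        using less.prems fC CX by auto
      ultimately have "card (good (X - C) (Ro - {r} \<union> C)) = hh (card (X - C)) (card (Ro - {r} \<union> C))"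
        using less.hyps by blast
      then show "card (good (X - C) (Ro - {r} \<union> C)) = hh (?j - card C) (?s - 1 + card C)"
        using c1 c2 by simp
    qed
    also have "\<dots> = (\<Sum>i\<le>?j. (?j choose i) * hh (?j - i) (?s - 1 + i))"
      using sum_Pow_card[OF less.prems(1), of "\<lambda>c. hh (?j - c) (?s - 1 + c)"] by simp
    also have "\<dots> = hh ?j ?s"
    proof (cases "?j = 0")
      case True then show ?thesis by (simp add: hh_def)
    next
      case False
      then show ?thesis using id_h[OF s1, of ?j] by (simp add: hh_def)
    qed
    finally show ?thesis .
  qed
qed

lemma card_goodx:
  assumes "finite X" "finite Ro" "X \<inter> Ro = {}" "x \<in> X" "\<rho> \<in> Ro"
  shows "card (goodx X Ro x \<rho>) = (card X + card Ro) ^ (card X - 1)"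
  using assms
proof (induction "card X + card Ro" arbitrary: X Ro rule: less_induct)
  case less
  let ?j = "card X" and ?s = "card Ro"
  have j1: "?j \<ge> 1" using less.prems by (metis One_nat_def Suc_leI card_gt_0_iff empty_iff)
  show ?case
  proof (cases "Ro = {\<rho>}")
    case True
    have "goodx X Ro x \<rho> = good X Ro"
    proof
      show "goodx X Ro x \<rho> \<subseteq> good X Ro" by (auto simp: goodx_def)
      show "good X Ro \<subseteq> goodx X Ro x \<rho>"
      proof
        fix E assume E: "E \<in> good X Ro"
        then obtain \<rho>' where "\<rho>' \<in> Ro" "conn E x \<rho>'" using less.prems(4) unfolding good_def by blast
        then show "E \<in> goodx X Ro x \<rho>" using True E by (simp add: goodx_def)
      qed
    qed
    then show ?thesis using card_good[OF less.prems(1-3)] True j1 by (simp add: hh_def)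
  next
    case False
    then obtain r where r: "r \<in> Ro" "r \<noteq> \<rho>" using less.prems(5) by blast
    have s1: "?s \<ge> 1" using r less.prems by (metis One_nat_def Suc_leI card_gt_0_iff empty_iff)
    have "card (goodx X Ro x \<rho>) = (\<Sum>C\<in>Pow (X - {x}). card (goodx (X - C) (Ro - {r} \<union> C) x \<rho>))"
      using card_goodx_rec[OF less.prems(1-3) r(1) less.prems(4) less.prems(5) r(2)[symmetric]] .
    also have "\<dots> = (\<Sum>C\<in>Pow (X - {x}). (?j + ?s - 1) ^ (?j - 1 - card C))"
    proof (rule sum.cong[OF refl])
      fix C assume "C \<in> Pow (X - {x})"
      then have CX: "C \<subseteq> X" and xC: "x \<notin> C" by auto
      have fC: "finite C" using CX less.prems(1) by (rule finite_subset)
      have c1: "card (X - C) = ?j - card C" using CX fC by (simp add: card_Diff_subset)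
      have dj: "(Ro - {r}) \<inter> C = {}" using CX less.prems(3) by blast
      have c2: "card (Ro - {r} \<union> C) = ?s - 1 + card C"
        using card_Un_disjoint[OF _ fC dj] less.prems(2) r by simp
      have le: "card C \<le> ?j - 1"
      proof -
        have "C \<subseteq> X - {x}" using CX xC by blast
        then have "card C \<le> card (X - {x})" using less.prems(1) by (simp add: card_mono)
        then show ?thesis using less.prems(4) less.prems(1) by simp
      qed
      have "card (X - C) + card (Ro - {r} \<union> C) < card X + card Ro"
        using c1 c2 le s1 j1 by linarith
      moreover have "finite (X - C)" "finite (Ro - {r} \<union> C)" "(X - C) \<inter> (Ro - {r} \<union> C) = {}"
        "x \<in> X - C" "\<rho> \<in> Ro - {r} \<union> C"
        using less.prems fC CX xC r by auto
      ultimately have "card (goodx (X - C) (Ro - {r} \<union> C) x \<rho>)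
          = (card (X - C) + card (Ro - {r} \<union> C)) ^ (card (X - C) - 1)"
        using less.hyps by blast
      moreover have "card (X - C) + card (Ro - {r} \<union> C) = ?j + ?s - 1"
        using c1 c2 le s1 j1 by linarith
      moreover have "card (X - C) - 1 = ?j - 1 - card C" using c1 by simp
      ultimately show "card (goodx (X - C) (Ro - {r} \<union> C) x \<rho>) = (?j + ?s - 1) ^ (?j - 1 - card C)"
        by simp
    qed
    also have "\<dots> = (\<Sum>i\<le>?j - 1. (?j - 1 choose i) * (?j + ?s - 1) ^ (?j - 1 - i))"
    proof -
      have cx: "card (X - {x}) = ?j - 1" using less.prems(1,4) by simp
      show ?thesis
        using sum_Pow_card[of "X - {x}" "\<lambda>c. (?j + ?s - 1) ^ (?j - 1 - c)"] less.prems(1)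
        unfolding cx by simp
    qed
    also have "\<dots> = (?j + ?s) ^ (?j - 1)" using id_g[OF s1 j1] .
    finally show ?thesis .
  qed
qed



lemma sg_mono:
  assumes "simple_graph V E" "V \<subseteq> W" shows "simple_graph W E"
  unfolding simple_graph_def
proof
  fix e assume "e \<in> E"
  then obtain u v where "u \<noteq> v" "e = {u, v}" "u \<in> V" "v \<in> V"
    using assms(1) unfolding simple_graph_def by meson
  then show "\<exists>u v. u \<noteq> v \<and> e = {u, v} \<and> u \<in> W \<and> v \<in> W"
    using assms(2) by (intro exI[of _ u] exI[of _ v]) auto
qed

lemma comp_eq:
  assumes "conn E v w" shows "{u \<in> V. conn E v u} = {u \<in> V. conn E w u}"
proof -
  have "conn E v u \<longleftrightarrow> conn E w u" for u
  proof
    assume "conn E v u" then show "conn E w u" by (rule conn_trans[OF conn_sym[OF assms]])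
  next
    assume "conn E w u" then show "conn E v u" by (rule conn_trans[OF assms])
  qed
  then show ?thesis by simp
qed

lemma XR: "1 \<le> k \<Longrightarrow> k + 1 \<le> n \<Longrightarrow> {2..k+1} \<union> insert 1 {k+2..n} = {1..(n::nat)}"
  by auto

lemma L1:
  fixes k n :: nat
  assumes k: "1 \<le> k" and n: "k + 1 \<le> n" and R: "R \<subseteq> {k+2..n}" and V: "V = {1..k+1} \<union> R"
    and F: "is_forest V E"
    and H1: "\<forall>T \<in> components V E. card T \<ge> 2"
    and H2: "\<exists>!T. T \<in> components V E \<and> T \<inter> R = {}"
    and H3: "\<forall>T \<in> components V E. T \<inter> R = {} \<longrightarrow> 1 \<in> T \<and> 2 \<in> T"
    and H4: "\<forall>T \<in> components V E. T \<inter> R \<noteq> {} \<longrightarrow> card (T \<inter> R) = 1"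
  shows "E \<in> goodx {2..k+1} (insert 1 {k+2..n}) 2 1 \<and> V = {1..k+1} \<union> ({k+2..n} \<inter> \<Union>E)"
proof -
  define S where "S = {k+2..n}"
  define Ro where "Ro = insert 1 S"
  have sg: "simple_graph V E" and nc: "\<not> has_cycle E" using F by (auto simp: is_forest_def)
  have Vfin: "finite V" using V R by (auto intro: finite_subset)
  have VS: "V \<inter> S = R" using V R by (auto simp: S_def)
  have VSub: "V \<subseteq> {1..n}" using V R n by auto
  define comp where "comp v = {u \<in> V. conn E v u}" for v
  have comps: "components V E = comp ` V" by (simp add: components_def comp_def)
  have inV: "u \<in> V" if "v \<in> V" "conn E v u" for v u using conn_in_V[OF that(2) sg that(1)] .
  have compin: "comp v \<in> components V E" if "v \<in> V" for v using that comps by simp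
  have big: "\<exists>u. u \<noteq> v \<and> conn E v u" if v: "v \<in> V" for v
  proof (rule ccontr)
    assume "\<not> ?thesis"
    then have "comp v \<subseteq> {v}" by (auto simp: comp_def)
    then have "card (comp v) \<le> 1" using card_mono[of "{v}" "comp v"] by simp
    with H1 compin[OF v] show False by fastforce
  qed
  have Req: "R = S \<inter> \<Union>E"
  proof
    show "R \<subseteq> S \<inter> \<Union>E"
    proof
      fix \<rho> assume \<rho>: "\<rho> \<in> R"
      then have "\<rho> \<in> V" using V by simp
      then obtain u where "u \<noteq> \<rho>" "conn E \<rho> u" using big by blast
      then have "\<rho> \<in> \<Union>E" using conn_Union[OF conn_sym] by metis
      then show "\<rho> \<in> S \<inter> \<Union>E" using \<rho> R by (simp add: S_def subset_iff)
    qed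
    show "S \<inter> \<Union>E \<subseteq> R"
    proof
      fix \<rho> assume \<rho>: "\<rho> \<in> S \<inter> \<Union>E"
      then obtain e where e: "e \<in> E" "\<rho> \<in> e" by blast
      obtain a b where "e = {a, b}" "a \<in> V" "b \<in> V" using sg e(1) unfolding simple_graph_def by meson
      then have "\<rho> \<in> V" using e(2) by auto
      then show "\<rho> \<in> R" using VS \<rho> by blast
    qed
  qed
  obtain T0 where T0: "T0 \<in> components V E" "T0 \<inter> R = {}" using H2 by blast
  have T0u: "T = T0" if "T \<in> components V E" "T \<inter> R = {}" for T using H2 T0 that by blast
  obtain w where w: "w \<in> V" "T0 = comp w" using T0(1) comps by blast
  have w12: "conn E w 1" "conn E w 2" using H3 T0 w by (auto simp: comp_def)
  have c21: "conn E 2 1" using conn_trans[OF conn_sym[OF w12(2)] w12(1)] .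
  have sgn: "simple_graph {1..n} E" using sg_mono[OF sg VSub] .
  have un: "\<exists>!\<rho>. \<rho> \<in> Ro \<and> conn E v \<rho>" if v: "v \<in> {1..n}" for v
  proof (cases "v \<in> V")
    case False
    have vE: "v \<notin> \<Union>E"
    proof
      assume "v \<in> \<Union>E"
      then obtain e where e: "e \<in> E" "v \<in> e" by blast
      obtain a b where "e = {a, b}" "a \<in> V" "b \<in> V" using sg e(1) unfolding simple_graph_def by meson
      then show False using e(2) False by auto
    qed
    have "v \<in> S" using v False V by (auto simp: S_def)
    then have "v \<in> Ro" by (simp add: Ro_def)
    moreover have "\<rho> = v" if "conn E v \<rho>" for \<rho> using conn_isolated[OF that vE] .
    ultimately show ?thesis by blast
  next
    case True
    show ?thesis
    proof (cases "comp v \<inter> R = {}")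
      case True2: True
      then have "comp v = T0" using T0u compin[OF True] by blast
      then have "1 \<in> comp v" using H3 T0 by blast
      then have c1: "conn E v 1" by (simp add: comp_def)
      have "\<rho> = 1" if "\<rho> \<in> Ro" "conn E v \<rho>" for \<rho>
      proof (rule ccontr)
        assume "\<rho> \<noteq> 1"
        then have "\<rho> \<in> S" using that by (simp add: Ro_def)
        moreover have "\<rho> \<in> V" using inV[OF True that(2)] .
        ultimately have "\<rho> \<in> R" using VS by blast
        moreover have "\<rho> \<in> comp v" using \<open>\<rho> \<in> V\<close> that by (simp add: comp_def)
        ultimately show False using True2 by blast
      qed
      then show ?thesis using c1 by (auto simp: Ro_def)
    next
      case False2: False
      then obtain \<rho>0 where \<rho>0: "\<rho>0 \<in> comp v \<inter> R" by blast
      have "card (comp v \<inter> R) = 1" using H4 compin[OF True] False2 by blast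
      then obtain z where "comp v \<inter> R = {z}" by (rule card_1_singletonE)
      then have single: "comp v \<inter> R = {\<rho>0}" using \<rho>0 by simp
      have c0: "conn E v \<rho>0" using \<rho>0 by (simp add: comp_def)
      have r0: "\<rho>0 \<in> Ro" using \<rho>0 R by (auto simp: Ro_def S_def)
      have "\<rho> = \<rho>0" if "\<rho> \<in> Ro" "conn E v \<rho>" for \<rho>
      proof -
        have \<rho>V: "\<rho> \<in> V" using inV[OF True that(2)] .
        then have \<rho>c: "\<rho> \<in> comp v" using that by (simp add: comp_def)
        show ?thesis
        proof (cases "\<rho> = 1")
          case False
          then have "\<rho> \<in> R" using that(1) \<rho>V VS by (auto simp: Ro_def)
          then show ?thesis using single \<rho>c by blast
        next
          case True3: True
          have "conn E v w" using that(2) True3 w12(1) conn_sym conn_trans by blast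
          then have "comp v = T0" using w(2) comp_eq by (simp add: comp_def)
          then show ?thesis using T0(2) \<rho>0 by blast
        qed
      qed
      then show ?thesis using c0 r0 by blast
    qed
  qed
  have "E \<in> good {2..k+1} Ro"
    unfolding good_def Ro_def S_def using XR[OF k n] sgn nc un
    by (simp add: Ro_def S_def)
  then have "E \<in> goodx {2..k+1} (insert 1 {k+2..n}) 2 1"
    using c21 by (simp add: goodx_def Ro_def S_def)
  moreover have "V = {1..k+1} \<union> ({k+2..n} \<inter> \<Union>E)" using V Req by (simp add: S_def)
  ultimately show ?thesis by blast
qed



lemma L2:
  fixes k n :: nat
  assumes k: "1 \<le> k" and n: "k + 1 \<le> n" and G: "E \<in> goodx {2..k+1} (insert 1 {k+2..n}) 2 1"
  defines "R \<equiv> {k+2..n} \<inter> \<Union>E"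
  defines "V \<equiv> {1..k+1} \<union> R"
  shows "R \<subseteq> {k+2..n} \<and> V = {1..k+1} \<union> R \<and> is_forest V E
            \<and> (\<forall>T \<in> components V E. card T \<ge> 2)
            \<and> (\<exists>!T. T \<in> components V E \<and> T \<inter> R = {})
            \<and> (\<forall>T \<in> components V E. T \<inter> R = {} \<longrightarrow> 1 \<in> T \<and> 2 \<in> T)
            \<and> (\<forall>T \<in> components V E. T \<inter> R \<noteq> {} \<longrightarrow> card (T \<inter> R) = 1)"
proof -
  define S where "S = {k+2..n}"
  define Ro where "Ro = insert 1 S"
  have Eg: "E \<in> good {2..k+1} Ro" and c21: "conn E 2 1"
    using G by (auto simp: goodx_def Ro_def S_def)
  have XRo: "{2..k+1} \<union> Ro = {1..n}" using XR[OF k n] by (simp add: Ro_def S_def)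
  have sg0: "simple_graph {1..n} E" and nc: "\<not> has_cycle E"
    using Eg XRo unfolding good_def by auto
  have uq: "\<rho>1 = \<rho>2" if "v \<in> {1..n}" "\<rho>1 \<in> Ro" "conn E v \<rho>1" "\<rho>2 \<in> Ro" "conn E v \<rho>2" for v \<rho>1 \<rho>2
    using uniq_root[OF Eg _ that(2,3,4,5)] that(1) XRo by blast
  have exr: "\<exists>\<rho>. \<rho> \<in> Ro \<and> conn E v \<rho>" if "v \<in> {1..n}" for v
  proof -
    have "\<forall>v \<in> {2..k+1} \<union> Ro. \<exists>!\<rho>. \<rho> \<in> Ro \<and> conn E v \<rho>" using Eg by (simp add: good_def)
    then have "\<exists>!\<rho>. \<rho> \<in> Ro \<and> conn E v \<rho>" using that XRo by simp
    then show ?thesis by (rule ex1_implies_ex)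
  qed
  have RS: "R \<subseteq> S" by (simp add: R_def S_def)
  have MS: "{1..k+1} \<inter> S = {}" by (auto simp: S_def)
  have VS: "V \<inter> S \<subseteq> R" using MS by (auto simp: V_def)
  have VSub: "V \<subseteq> {1..n}" using n by (auto simp: V_def R_def)
  have Vfin: "finite V" using VSub by (rule finite_subset) simp
  have sgV: "simple_graph V E"
    unfolding simple_graph_def
  proof
    fix e assume e: "e \<in> E"
    then obtain a b where ab: "a \<noteq> b" "e = {a, b}" "a \<in> {1..n}" "b \<in> {1..n}"
      using sg0 unfolding simple_graph_def by meson
    have "x \<in> V" if "x \<in> e" "x \<in> {1..n}" for x
    proof (cases "x \<le> k + 1")
      case True then show ?thesis using that by (simp add: V_def)
    next
      case False then have "x \<in> S" using that by (simp add: S_def)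
      then show ?thesis using that e by (auto simp: V_def R_def S_def)
    qed
    then have "a \<in> V" "b \<in> V" using ab by auto
    then show "\<exists>u v. u \<noteq> v \<and> e = {u, v} \<and> u \<in> V \<and> v \<in> V"
      using ab by (intro exI[of _ a] exI[of _ b]) auto
  qed
  have forest: "is_forest V E" using sgV nc by (simp add: is_forest_def)
  define comp where "comp v = {u \<in> V. conn E v u}" for v
  have comps: "components V E = comp ` V" by (simp add: components_def comp_def)
  have inV: "u \<in> V" if "v \<in> V" "conn E v u" for v u using conn_in_V[OF that(2) sgV that(1)] .
  have rootV: "\<exists>\<rho>. \<rho> \<in> Ro \<and> conn E v \<rho> \<and> \<rho> \<in> V" if v: "v \<in> V" for v
  proof -
    obtain \<rho> where \<rho>: "\<rho> \<in> Ro" "conn E v \<rho>" using exr v VSub by blast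
    then have "\<rho> \<in> V" using inV v by blast
    then show ?thesis using \<rho> by blast
  qed
  have one: "1 \<in> V" "2 \<in> V" using k by (auto simp: V_def)
  have c12: "conn E 1 2" using conn_sym[OF c21] .
  have H1: "card T \<ge> 2" if T: "T \<in> components V E" for T
  proof -
    obtain v where v: "v \<in> V" "T = comp v" using T comps by blast
    have "\<exists>u. u \<noteq> v \<and> conn E v u"
    proof (cases "v \<in> R")
      case True
      then obtain e where e: "e \<in> E" "v \<in> e" by (auto simp: R_def)
      obtain a b where ab: "a \<noteq> b" "e = {a, b}" using sgV e(1) unfolding simple_graph_def by meson
      have "\<exists>u. e = {v, u} \<and> u \<noteq> v"
      proof (cases "v = a")
        case True then show ?thesis using ab by (intro exI[of _ b]) simp
      next
        case False then have "v = b" using ab e(2) by simp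
        then show ?thesis using ab by (intro exI[of _ a]) (simp add: insert_commute)
      qed
      then obtain u where u: "e = {v, u}" "u \<noteq> v" by blast
      have "conn E v u" using conn_edge[of v u E] e(1) u(1) by simp
      then show ?thesis using u(2) by (intro exI[of _ u]) simp
    next
      case False
      then have vM: "v \<in> {1..k+1}" using v by (simp add: V_def)
      show ?thesis
      proof (cases "v = 1")
        case True then show ?thesis using c12 by (intro exI[of _ "2::nat"]) simp
      next
        case False
        then have "v \<notin> Ro" using vM by (auto simp: Ro_def S_def)
        obtain \<rho> where \<rho>: "\<rho> \<in> Ro" "conn E v \<rho>" using rootV v by blast
        have "\<rho> \<noteq> v" using \<rho>(1) \<open>v \<notin> Ro\<close> by auto
        then show ?thesis using \<rho>(2) by (intro exI[of _ \<rho>]) simp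
      qed
    qed
    then obtain u where u: "u \<noteq> v" "conn E v u" by blast
    have "u \<in> T" "v \<in> T" using u v inV by (auto simp: comp_def)
    moreover have "finite T" using v Vfin by (simp add: comp_def)
    ultimately have "card {v, u} \<le> card T" by (intro card_mono) auto
    then show ?thesis using u by simp
  qed
  have T1R: "comp 1 \<inter> R = {}"
  proof (rule ccontr)
    assume "comp 1 \<inter> R \<noteq> {}"
    then obtain \<rho> where "\<rho> \<in> comp 1" "\<rho> \<in> R" by blast
    then have "conn E 1 \<rho>" "\<rho> \<in> Ro" using RS by (auto simp: comp_def Ro_def)
    then have "\<rho> = 1" using uq[of 1 \<rho> 1] n by (simp add: Ro_def)
    moreover have "(1::nat) \<notin> R" by (simp add: R_def)
    ultimately show False using \<open>\<rho> \<in> R\<close> by simp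
  qed
  have T1u: "T = comp 1" if TT: "T \<in> components V E" "T \<inter> R = {}" for T
  proof -
    obtain v where v: "v \<in> V" "T = comp v" using TT(1) comps by blast
    obtain \<rho> where \<rho>: "\<rho> \<in> Ro" "conn E v \<rho>" "\<rho> \<in> V" using rootV v by blast
    have "\<rho> \<in> T" using \<rho> v by (simp add: comp_def)
    have "\<rho> = 1"
    proof (rule ccontr)
      assume "\<rho> \<noteq> 1"
      then have "\<rho> \<in> S" using \<rho>(1) by (simp add: Ro_def)
      then have "\<rho> \<in> R" using VS \<rho>(3) by blast
      then show False using \<open>\<rho> \<in> T\<close> that(2) by blast
    qed
    then have "conn E v 1" using \<rho>(2) by simp
    then have "comp v = comp 1" unfolding comp_def by (rule comp_eq)
    then show ?thesis using v(2) by simp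
  qed
  have H2: "\<exists>!T. T \<in> components V E \<and> T \<inter> R = {}"
  proof (rule ex1I[of _ "comp 1"])
    show "comp 1 \<in> components V E \<and> comp 1 \<inter> R = {}" using T1R one comps by simp
    show "T = comp 1" if "T \<in> components V E \<and> T \<inter> R = {}" for T using T1u that by blast
  qed
  have H3: "1 \<in> T \<and> 2 \<in> T" if "T \<in> components V E" "T \<inter> R = {}" for T
    using T1u[OF that] one c12 by (simp add: comp_def)
  have H4: "card (T \<inter> R) = 1" if T: "T \<in> components V E" "T \<inter> R \<noteq> {}" for T
  proof -
    obtain v where v: "v \<in> V" "T = comp v" using T comps by blast
    obtain \<rho>0 where \<rho>0: "\<rho>0 \<in> T \<inter> R" using T(2) by blast
    have vn: "v \<in> {1..n}" using v VSub by blast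
    have xeq: "x = \<rho>0" if "x \<in> T \<inter> R" for x
    proof -
      have a: "conn E v x" "conn E v \<rho>0" using that \<rho>0 v by (auto simp: comp_def)
      have b: "x \<in> Ro" "\<rho>0 \<in> Ro" using that \<rho>0 RS by (auto simp: Ro_def)
      show ?thesis by (rule uq[OF vn b(1) a(1) b(2) a(2)])
    qed
    have "T \<inter> R = {\<rho>0}"
    proof
      show "T \<inter> R \<subseteq> {\<rho>0}" using xeq by blast
      show "{\<rho>0} \<subseteq> T \<inter> R" using \<rho>0 by simp
    qed
    then show ?thesis by simp
  qed
  show ?thesis
  proof (intro conjI)
    show "R \<subseteq> {k+2..n}" using RS by (simp add: S_def)
    show "V = {1..k+1} \<union> R" by (simp add: V_def)
    show "is_forest V E" by (rule forest)
    show "\<forall>T \<in> components V E. card T \<ge> 2" using H1 by blast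
    show "\<exists>!T. T \<in> components V E \<and> T \<inter> R = {}" by (rule H2)
    show "\<forall>T \<in> components V E. T \<inter> R = {} \<longrightarrow> 1 \<in> T \<and> 2 \<in> T" using H3 by blast
    show "\<forall>T \<in> components V E. T \<inter> R \<noteq> {} \<longrightarrow> card (T \<inter> R) = 1" using H4 by blast
  qed
qed

theorem theorem5p16:
  fixes k n :: nat
  assumes "k \<ge> 1" and "n \<ge> k + 1"
  shows "card {(V, E). \<exists>R. R \<subseteq> {k+2..n} \<and> V = {1..k+1} \<union> R \<and> is_forest V E
            \<and> (\<forall>T \<in> components V E. card T \<ge> 2)
            \<and> (\<exists>!T. T \<in> components V E \<and> T \<inter> R = {})
            \<and> (\<forall>T \<in> components V E. T \<inter> R = {} \<longrightarrow> 1 \<in> T \<and> 2 \<in> T)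
            \<and> (\<forall>T \<in> components V E. T \<inter> R \<noteq> {} \<longrightarrow> card (T \<inter> R) = 1)}
         = n ^ (k - 1)"
  (is "card ?S = _")
proof -
  let ?G = "goodx {2..k+1} (insert 1 {k+2..n}) 2 1"
  let ?g = "\<lambda>E. ({1..k+1} \<union> ({k+2..n} \<inter> \<Union>E), E)"
  have eq: "?S = ?g ` ?G"
  proof
    show "?S \<subseteq> ?g ` ?G"
    proof
      fix p assume pS: "p \<in> ?S"
      obtain V E where p: "p = (V, E)" by (cases p)
      from pS have "\<exists>R. R \<subseteq> {k+2..n} \<and> V = {1..k+1} \<union> R \<and> is_forest V E
            \<and> (\<forall>T \<in> components V E. card T \<ge> 2)
            \<and> (\<exists>!T. T \<in> components V E \<and> T \<inter> R = {})
            \<and> (\<forall>T \<in> components V E. T \<inter> R = {} \<longrightarrow> 1 \<in> T \<and> 2 \<in> T)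
            \<and> (\<forall>T \<in> components V E. T \<inter> R \<noteq> {} \<longrightarrow> card (T \<inter> R) = 1)"
        unfolding p by (simp only: mem_Collect_eq case_prod_conv)
      then obtain R where R: "R \<subseteq> {k+2..n} \<and> V = {1..k+1} \<union> R \<and> is_forest V E
            \<and> (\<forall>T \<in> components V E. card T \<ge> 2)
            \<and> (\<exists>!T. T \<in> components V E \<and> T \<inter> R = {})
            \<and> (\<forall>T \<in> components V E. T \<inter> R = {} \<longrightarrow> 1 \<in> T \<and> 2 \<in> T)
            \<and> (\<forall>T \<in> components V E. T \<inter> R \<noteq> {} \<longrightarrow> card (T \<inter> R) = 1)"
        by (rule exE)
      have "E \<in> ?G \<and> V = {1..k+1} \<union> ({k+2..n} \<inter> \<Union>E)"
        using R by (elim conjE) (rule L1[OF assms(1) assms(2)]; assumption)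
      then show "p \<in> ?g ` ?G" using p by blast
    qed
    show "?g ` ?G \<subseteq> ?S"
    proof
      fix p assume "p \<in> ?g ` ?G"
      then obtain E where E: "E \<in> ?G" "p = ?g E" by (rule imageE) simp
      have "\<exists>R. R \<subseteq> {k+2..n} \<and> {1..k+1} \<union> ({k+2..n} \<inter> \<Union>E) = {1..k+1} \<union> R
            \<and> is_forest ({1..k+1} \<union> ({k+2..n} \<inter> \<Union>E)) E
            \<and> (\<forall>T \<in> components ({1..k+1} \<union> ({k+2..n} \<inter> \<Union>E)) E. card T \<ge> 2)
            \<and> (\<exists>!T. T \<in> components ({1..k+1} \<union> ({k+2..n} \<inter> \<Union>E)) E \<and> T \<inter> R = {})
            \<and> (\<forall>T \<in> components ({1..k+1} \<union> ({k+2..n} \<inter> \<Union>E)) E. T \<inter> R = {} \<longrightarrow> 1 \<in> T \<and> 2 \<in> T)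
            \<and> (\<forall>T \<in> components ({1..k+1} \<union> ({k+2..n} \<inter> \<Union>E)) E. T \<inter> R \<noteq> {} \<longrightarrow> card (T \<inter> R) = 1)"
        by (rule exI[of _ "{k+2..n} \<inter> \<Union>E"]) (rule L2[OF assms(1) assms(2) E(1)])
      then show "p \<in> ?S" unfolding E(2) by (simp only: mem_Collect_eq case_prod_conv)
    qed
  qed
  have inj: "inj_on ?g ?G" by (rule inj_onI) simp
  have "card ?S = card ?G" using eq card_image[OF inj] by simp
  also have "\<dots> = (card {2..k+1} + card (insert 1 {k+2..n})) ^ (card {2..k+1} - 1)"
    by (rule card_goodx) (use assms in auto)
  also have "\<dots> = n ^ (k - 1)"
  proof -
    have "card {2..k+1} = k" by simp
    moreover have "card (insert 1 {k+2..n}) = n - k" using assms by simp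
    ultimately show ?thesis using assms by simp
  qed
  finally show ?thesis .
qed

end
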